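(* Let $G$ be a finite abstract simplicial complex. Then $$\sum_{x \in G} w(x)\, w(S(x)) = 0.$$
   Context: A finite abstract simplicial complex $G$ is a finite set of non-empty finite sets such that every non-empty subset of an element of $G$ is again in $G$. For $x\in G$, $w(x)=(-1)^{|x|-1}$, and for $A\subset G$, $w(A)=\sum_{y\in A}w(y)$. $G$ carries the finite topology whose basis consists of the stars $U(x)=\{y\in G : x\subset y\}$. The unit ball $B(x)$ is the closure of $U(x)$, i.e. $B(x)=\{y\in G : y\subset z \text{ for some } z\in G \text{ with } x\subset z\}$, and the unit sphere is $S(x)=B(x)\setminus U(x)$. *)

theory Defs
  imports Main
begin

definition simplicial_complex :: "'a set set \<Rightarrow> bool" where
  "simplicial_complex G \<longleftrightarrow> finite G \<and>
     (\<forall>x\<in>G. x \<noteq> {} \<and> finite x) \<and>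
     (\<forall>x\<in>G. \<forall>y. y \<subseteq> x \<and> y \<noteq> {} \<longrightarrow> y \<in> G)"

definition w :: "'a set \<Rightarrow> int" where
  "w x = (-1) ^ (card x - 1)"

definition wset :: "'a set set \<Rightarrow> int" where
  "wset A = (\<Sum>y\<in>A. w y)"

definition star :: "'a set set \<Rightarrow> 'a set \<Rightarrow> 'a set set" where
  "star G x = {y\<in>G. x \<subseteq> y}"

definition ball :: "'a set set \<Rightarrow> 'a set \<Rightarrow> 'a set set" where
  "ball G x = {y\<in>G. \<exists>z\<in>G. x \<subseteq> z \<and> y \<subseteq> z}"

definition sphere :: "'a set set \<Rightarrow> 'a set \<Rightarrow> 'a set set" where
  "sphere G x = ball G x - star G x"

end

theory Submission
  imports Defs
begin

lemma w_insert:
  assumes "finite y" "y \<noteq> {}" "v \<notin> y"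
  shows "w (insert v y) = - w y"
proof -
  have "card y \<ge> 1" using assms by (simp add: Suc_leI card_gt_0_iff)
  then obtain k where k: "card y = Suc k" by (cases "card y") auto
  show ?thesis using assms k by (simp add: w_def)
qed

lemma toggle:
  fixes A :: "'a set set"
  assumes fin: "finite A" and ne: "{} \<notin> A" and fe: "\<forall>y\<in>A. finite y"
    and sv: "{v} \<in> A" and ins: "\<forall>y\<in>A. insert v y \<in> A"
    and del: "\<forall>y\<in>A. y \<noteq> {v} \<longrightarrow> y - {v} \<in> A"
  shows "wset A = 1"
proof -
  define A1 where "A1 = {y\<in>A. v \<notin> y}"
  define A2 where "A2 = {y\<in>A. v \<in> y}"
  have split: "A = A1 \<union> A2" "A1 \<inter> A2 = {}" unfolding A1_def A2_def by auto
  have f1: "finite A1" "finite A2" using fin unfolding A1_def A2_def by auto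
  have A2eq: "A2 = insert v ` (insert {} A1)"
  proof
    show "insert v ` insert {} A1 \<subseteq> A2" using sv ins unfolding A1_def A2_def by auto
  next
    show "A2 \<subseteq> insert v ` insert {} A1"
    proof
      fix y assume y: "y \<in> A2"
      show "y \<in> insert v ` insert {} A1"
      proof (cases "y = {v}")
        case True then show ?thesis by auto
      next
        case False
        then have "y - {v} \<in> A1" using y del unfolding A1_def A2_def by auto
        moreover have "y = insert v (y - {v})" using y unfolding A2_def by auto
        ultimately show ?thesis by blast
      qed
    qed
  qed
  have inj: "inj_on (insert v) (insert {} A1)"
  proof (rule inj_onI)
    fix a b assume "a \<in> insert {} A1" "b \<in> insert {} A1" "insert v a = insert v b"
    moreover have "v \<notin> a" "v \<notin> b" using calculation unfolding A1_def by auto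
    ultimately show "a = b" using insert_ident by metis
  qed
  have "{} \<notin> A1" using ne unfolding A1_def by auto
  then have "wset A2 = w (insert v {}) + (\<Sum>y\<in>A1. w (insert v y))"
    unfolding wset_def A2eq using inj f1 by (simp add: sum.reindex)
  also have "(\<Sum>y\<in>A1. w (insert v y)) = (\<Sum>y\<in>A1. - w y)"
    by (rule sum.cong) (use fe ne in \<open>auto simp: A1_def intro!: w_insert\<close>)
  finally have "wset A2 = 1 - wset A1"
    by (simp add: wset_def w_def sum_negf)
  moreover have "wset A = wset A1 + wset A2"
    unfolding wset_def using split f1 by (simp add: sum.union_disjoint)
  ultimately show ?thesis by simp
qed

lemma ball_one:
  assumes G: "simplicial_complex G" and x: "x \<in> G"
  shows "wset (ball G x) = 1"
proof -
  have fG: "finite G" and neG: "\<forall>x\<in>G. x \<noteq> {} \<and> finite x"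
    and clG: "\<And>x y. x \<in> G \<Longrightarrow> y \<subseteq> x \<Longrightarrow> y \<noteq> {} \<Longrightarrow> y \<in> G"
  proof -
    have G0: "finite G \<and> (\<forall>x\<in>G. x \<noteq> {} \<and> finite x) \<and>
      (\<forall>x\<in>G. \<forall>y. y \<subseteq> x \<and> y \<noteq> {} \<longrightarrow> y \<in> G)"
      using G unfolding simplicial_complex_def .
    note G' = conjunct1[OF G0] conjunct1[OF conjunct2[OF G0]] conjunct2[OF conjunct2[OF G0]]
    show "finite G" "\<forall>x\<in>G. x \<noteq> {} \<and> finite x" by (fact G'(1), fact G'(2))
    show "\<And>x y. x \<in> G \<Longrightarrow> y \<subseteq> x \<Longrightarrow> y \<noteq> {} \<Longrightarrow> y \<in> G" using G'(3) by blast
  qed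
  have x0: "x \<noteq> {}" using neG x by auto
  then obtain v where v: "v \<in> x" by auto
  show ?thesis
  proof (rule toggle[where v=v])
    show "finite (ball G x)" using fG unfolding ball_def by simp
    show "{} \<notin> ball G x" "\<forall>y\<in>ball G x. finite y"
      using neG unfolding ball_def by auto
    have "{v} \<in> G" by (rule clG[OF x]) (use v in auto)
    then show "{v} \<in> ball G x" using x v unfolding ball_def by blast
    show "\<forall>y\<in>ball G x. insert v y \<in> ball G x"
    proof
      fix y assume "y \<in> ball G x"
      then obtain z where z: "z \<in> G" "x \<subseteq> z" "y \<subseteq> z" unfolding ball_def by auto
      have s: "insert v y \<subseteq> z" using z v by auto
      have "insert v y \<in> G" by (rule clG[OF z(1) s]) simp
      then show "insert v y \<in> ball G x" using z s unfolding ball_def by blast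
    qed
    show "\<forall>y\<in>ball G x. y \<noteq> {v} \<longrightarrow> y - {v} \<in> ball G x"
    proof (intro ballI impI)
      fix y assume y: "y \<in> ball G x" "y \<noteq> {v}"
      then obtain z where z: "z \<in> G" "x \<subseteq> z" "y \<subseteq> z" unfolding ball_def by auto
      have "y \<noteq> {}" using y neG unfolding ball_def by auto
      then have ne: "y - {v} \<noteq> {}" using y by auto
      have s: "y - {v} \<subseteq> z" using z by auto
      have "y - {v} \<in> G" using clG[OF z(1) s ne] .
      then show "y - {v} \<in> ball G x" using z s unfolding ball_def by blast
    qed
  qed
qed

lemma down_one:
  assumes G: "simplicial_complex G" and y: "y \<in> G"
  shows "wset {x\<in>G. x \<subseteq> y} = 1"
proof -
  have fG: "finite G" and neG: "\<forall>x\<in>G. x \<noteq> {} \<and> finite x"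
    and clG: "\<And>x y. x \<in> G \<Longrightarrow> y \<subseteq> x \<Longrightarrow> y \<noteq> {} \<Longrightarrow> y \<in> G"
  proof -
    have G0: "finite G \<and> (\<forall>x\<in>G. x \<noteq> {} \<and> finite x) \<and>
      (\<forall>x\<in>G. \<forall>y. y \<subseteq> x \<and> y \<noteq> {} \<longrightarrow> y \<in> G)"
      using G unfolding simplicial_complex_def .
    note G' = conjunct1[OF G0] conjunct1[OF conjunct2[OF G0]] conjunct2[OF conjunct2[OF G0]]
    show "finite G" "\<forall>x\<in>G. x \<noteq> {} \<and> finite x" by (fact G'(1), fact G'(2))
    show "\<And>x y. x \<in> G \<Longrightarrow> y \<subseteq> x \<Longrightarrow> y \<noteq> {} \<Longrightarrow> y \<in> G" using G'(3) by blast
  qed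
  have y0: "y \<noteq> {}" using neG y by auto
  then obtain v where v: "v \<in> y" by auto
  show ?thesis
  proof (rule toggle[where v=v])
    show "finite {x\<in>G. x \<subseteq> y}" using fG by simp
    show "{} \<notin> {x\<in>G. x \<subseteq> y}" "\<forall>x\<in>{x\<in>G. x \<subseteq> y}. finite x"
      using neG by auto
    have "{v} \<in> G" by (rule clG[OF y]) (use v in auto)
    then show "{v} \<in> {x\<in>G. x \<subseteq> y}" using v by simp
    show "\<forall>x\<in>{x\<in>G. x \<subseteq> y}. insert v x \<in> {x\<in>G. x \<subseteq> y}"
    proof
      fix x assume x: "x \<in> {x\<in>G. x \<subseteq> y}"
      have s: "insert v x \<subseteq> y" using x v by auto
      have "insert v x \<in> G" by (rule clG[OF y s]) simp
      then show "insert v x \<in> {x\<in>G. x \<subseteq> y}" using s by simp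
    qed
    show "\<forall>x\<in>{x\<in>G. x \<subseteq> y}. x \<noteq> {v} \<longrightarrow> x - {v} \<in> {x\<in>G. x \<subseteq> y}"
    proof (intro ballI impI)
      fix x assume x: "x \<in> {x\<in>G. x \<subseteq> y}" "x \<noteq> {v}"
      have "x \<noteq> {}" using x neG by auto
      then have ne: "x - {v} \<noteq> {}" using x by auto
      have s: "x - {v} \<subseteq> y" using x by auto
      show "x - {v} \<in> {x\<in>G. x \<subseteq> y}" using clG[OF y s ne] s by simp
    qed
  qed
qed

theorem mainTheorem4:
  fixes G :: "'a set set"
  assumes "simplicial_complex G"
  shows "(\<Sum>x\<in>G. w x * wset (sphere G x)) = 0"
proof -
  have fin: "finite G" using assms unfolding simplicial_complex_def by (rule conjunct1)
  have sph: "wset (sphere G x) = 1 - wset (star G x)" if x: "x \<in> G" for x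
  proof -
    have sub: "star G x \<subseteq> ball G x" unfolding star_def ball_def by blast
    have "finite (ball G x)" using fin unfolding ball_def by auto
    then have "wset (sphere G x) = wset (ball G x) - wset (star G x)"
      unfolding sphere_def wset_def using sub by (simp add: sum_diff)
    then show ?thesis using ball_one[OF assms x] by simp
  qed
  have "(\<Sum>x\<in>G. w x * wset (sphere G x)) = (\<Sum>x\<in>G. w x - w x * wset (star G x))"
    by (rule sum.cong) (auto simp: sph algebra_simps)
  also have "\<dots> = (\<Sum>x\<in>G. w x) - (\<Sum>x\<in>G. w x * wset (star G x))"
    by (simp add: sum_subtractf)
  also have "(\<Sum>x\<in>G. w x * wset (star G x)) = (\<Sum>x\<in>G. \<Sum>y\<in>G. if x \<subseteq> y then w x * w y else 0)"
    unfolding wset_def star_def sum_distrib_left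
    by (rule sum.cong) (auto simp: sum.inter_filter[OF fin, symmetric])
  also have "\<dots> = (\<Sum>y\<in>G. \<Sum>x\<in>G. if x \<subseteq> y then w x * w y else 0)"
    by (rule sum.swap)
  also have "\<dots> = (\<Sum>y\<in>G. w y * wset {x\<in>G. x \<subseteq> y})"
    unfolding wset_def sum_distrib_left
    by (rule sum.cong) (auto simp: sum.inter_filter[OF fin, symmetric] mult.commute)
  also have "\<dots> = (\<Sum>y\<in>G. w y)"
    by (rule sum.cong) (auto simp: down_one[OF assms])
  finally show ?thesis by simp
qed

end
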